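(* Consider the clustering defined in the context, for a graph $G=(V,E)$ with integer weights $w\colon E\to\{1,\dots,W\}$ and parameters $p\in(0,1)$, $r\in\mathbb{N}$. For every outcome of the sampled values, each cluster $U$ has strong diameter at most $2r$, i.e., $d_{G[U]}(x,y)\leq 2r$ for all $x,y\in U$.
   Context: Setting (the clustering): $G=(V,E)$ is a graph with integer edge weights $w\colon E\to\{1,\dots,W\}$, $d_G$ the weighted shortest-path distance, and each vertex has a distinct identifier $\mathrm{ID}(v)$. Let $p\in(0,1)$ and $r\in\mathbb{N}$. Let $\mathrm{GeomCap}(p,r)$ be the distribution on $\{0,\dots,r\}$ with $\Pr[=i]=p(1-p)^i$ for $0\leq i\leq r-1$ and $\Pr[=r]=(1-p)^r$. Each vertex $v$ independently samples $\delta_v\sim\mathrm{GeomCap}(p,r)$. For $u,x\in V$ define $d^{(u)}(s,x):=r-\delta_u+d_G(u,x)$ and the level $d_{G'}(s,x):=\min_{u\in V} d^{(u)}(s,x)$. The cluster center $c_x$ of $x$ is the vertex $u$ with smallest $\mathrm{ID}$ among those with $d^{(u)}(s,x)=d_{G'}(s,x)$; the cluster of a center $c$ is $\{x\in V: c_x=c\}$. For $U\subseteq V$, $G[U]$ is the induced subgraph with weighted distance $d_{G[U]}$. *)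

theory Defs
  imports Main "HOL-Library.Extended_Nat"
begin

text \<open>Undirected weighted graph: edges are 2-element vertex sets, weights w :: 'a set => nat.\<close>

definition walk_in :: "'a set set \<Rightarrow> 'a set \<Rightarrow> 'a list \<Rightarrow> bool" where
  "walk_in E U xs \<longleftrightarrow> xs \<noteq> [] \<and> set xs \<subseteq> U \<and>
     (\<forall>i < length xs - 1. {xs ! i, xs ! Suc i} \<in> E)"

definition walk_weight :: "('a set \<Rightarrow> nat) \<Rightarrow> 'a list \<Rightarrow> nat" where
  "walk_weight w xs = (\<Sum>i < length xs - 1. w {xs ! i, xs ! Suc i})"

text \<open>Weighted distance in the subgraph induced by U (infinity if no walk exists).
  d_G is wdist E w V.\<close>
definition wdist :: "'a set set \<Rightarrow> ('a set \<Rightarrow> nat) \<Rightarrow> 'a set \<Rightarrow> 'a \<Rightarrow> 'a \<Rightarrow> enat" where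
  "wdist E w U x y = (INF xs \<in> {xs. walk_in E U xs \<and> hd xs = x \<and> last xs = y}.
                        enat (walk_weight w xs))"

definition wgraph :: "'a set \<Rightarrow> 'a set set \<Rightarrow> ('a set \<Rightarrow> nat) \<Rightarrow> nat \<Rightarrow> bool" where
  "wgraph V E w W \<longleftrightarrow> finite V \<and> (\<forall>e\<in>E. e \<subseteq> V \<and> card e = 2 \<and> 1 \<le> w e \<and> w e \<le> W)"

definition dvia :: "'a set \<Rightarrow> 'a set set \<Rightarrow> ('a set \<Rightarrow> nat) \<Rightarrow> nat \<Rightarrow> ('a \<Rightarrow> nat) \<Rightarrow> 'a \<Rightarrow> 'a \<Rightarrow> enat" where
  "dvia V E w r \<delta> u x = enat (r - \<delta> u) + wdist E w V u x"

text \<open>level d_{G'}(s,x) = min over u in V\<close>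
definition level :: "'a set \<Rightarrow> 'a set set \<Rightarrow> ('a set \<Rightarrow> nat) \<Rightarrow> nat \<Rightarrow> ('a \<Rightarrow> nat) \<Rightarrow> 'a \<Rightarrow> enat" where
  "level V E w r \<delta> x = (INF u \<in> V. dvia V E w r \<delta> u x)"

definition center :: "'a set \<Rightarrow> 'a set set \<Rightarrow> ('a set \<Rightarrow> nat) \<Rightarrow> ('a \<Rightarrow> nat) \<Rightarrow> nat \<Rightarrow> ('a \<Rightarrow> nat) \<Rightarrow> 'a \<Rightarrow> 'a" where
  "center V E w ID r \<delta> x = (THE c. c \<in> V \<and> dvia V E w r \<delta> c x = level V E w r \<delta> x \<and>
      (\<forall>u\<in>V. dvia V E w r \<delta> u x = level V E w r \<delta> x \<longrightarrow> ID c \<le> ID u))"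

definition cluster :: "'a set \<Rightarrow> 'a set set \<Rightarrow> ('a set \<Rightarrow> nat) \<Rightarrow> ('a \<Rightarrow> nat) \<Rightarrow> nat \<Rightarrow> ('a \<Rightarrow> nat) \<Rightarrow> 'a \<Rightarrow> 'a set" where
  "cluster V E w ID r \<delta> c = {x \<in> V. center V E w ID r \<delta> x = c}"

end

theory Submission
  imports Defs
begin

lemma walk_single[simp]: "walk_in E U [a] \<longleftrightarrow> a \<in> U"
  by (simp add: walk_in_def)
lemma weight_single[simp]: "walk_weight w [a] = 0"
  by (simp add: walk_weight_def)
lemma walk_Cons2[simp]: "walk_in E U (a # b # xs) \<longleftrightarrow> a \<in> U \<and> {a,b} \<in> E \<and> walk_in E U (b # xs)"
  unfolding walk_in_def by (auto simp: All_less_Suc2)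
lemma weight_Cons2[simp]: "walk_weight w (a # b # xs) = w {a,b} + walk_weight w (b # xs)"
  unfolding walk_weight_def by (simp del: sum.lessThan_Suc add: sum.lessThan_Suc_shift)

lemma walk_hd: "walk_in E U (a # xs) \<Longrightarrow> a \<in> U"
  by (simp add: walk_in_def)

lemma walk_append:
  "xs \<noteq> [] \<Longrightarrow> walk_in E U (xs @ ys) \<longleftrightarrow> walk_in E U xs \<and> walk_in E U (last xs # ys)"
proof (induction xs rule: induct_list012)
  case (3 a b zs) then show ?case by auto
qed (auto simp: neq_Nil_conv dest: walk_hd)

lemma weight_append:
  "xs \<noteq> [] \<Longrightarrow> walk_weight w (xs @ ys) = walk_weight w xs + walk_weight w (last xs # ys)"
proof (induction xs rule: induct_list012)
  case (3 a b zs) then show ?case by auto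
qed (auto simp: neq_Nil_conv)

lemma walk_rev: "walk_in E U (rev xs) \<longleftrightarrow> walk_in E U xs"
proof (induction xs rule: induct_list012)
  case (3 a b zs)
  have e: "rev (a # b # zs) = rev (b # zs) @ [a]" by simp
  have "walk_in E U (rev (a # b # zs)) \<longleftrightarrow> walk_in E U (rev (b # zs)) \<and> walk_in E U [b, a]"
    unfolding e using walk_append[of "rev (b#zs)" E U "[a]"] by (simp only: last_rev list.sel) simp
  also have "\<dots> \<longleftrightarrow> walk_in E U (b # zs) \<and> walk_in E U [b, a]" using 3(2) by (simp only:)
  also have "\<dots> \<longleftrightarrow> walk_in E U (a # b # zs)" by (auto simp: insert_commute dest: walk_hd)
  finally show ?case .
qed (auto simp: walk_in_def)

lemma weight_rev: "walk_weight w (rev xs) = walk_weight w xs"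
proof (induction xs rule: induct_list012)
  case (3 a b zs)
  have e: "rev (a # b # zs) = rev (b # zs) @ [a]" by simp
  have "walk_weight w (rev (a # b # zs)) = walk_weight w (rev (b # zs)) + walk_weight w [b, a]"
    unfolding e using weight_append[of "rev (b#zs)" w "[a]"] by (simp only: last_rev list.sel) simp
  then show ?case using 3 by (auto simp: insert_commute)
qed (auto simp: walk_weight_def)

lemma wdist_le: "walk_in E U xs \<Longrightarrow> hd xs = a \<Longrightarrow> last xs = b \<Longrightarrow> wdist E w U a b \<le> enat (walk_weight w xs)"
  unfolding wdist_def by (rule INF_lower) auto

lemma wdist_refl: "a \<in> U \<Longrightarrow> wdist E w U a a \<le> 0"
  using wdist_le[of E U "[a]" a a w] by (simp add: zero_enat_def)

lemma wdist_attained: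
  assumes "wdist E w U a b \<noteq> \<infinity>"
  shows "\<exists>xs. walk_in E U xs \<and> hd xs = a \<and> last xs = b \<and> enat (walk_weight w xs) = wdist E w U a b"
proof -
  let ?S = "(\<lambda>xs. enat (walk_weight w xs)) ` {xs. walk_in E U xs \<and> hd xs = a \<and> last xs = b}"
  have "?S \<noteq> {}" using assms unfolding wdist_def by (metis Inf_empty top_enat_def)
  then have "Inf ?S \<in> ?S" unfolding Inf_enat_def by (metis (mono_tags) LeastI_ex ex_in_conv)
  then obtain xs where "xs \<in> {xs. walk_in E U xs \<and> hd xs = a \<and> last xs = b}" "Inf ?S = enat (walk_weight w xs)"
    by blast
  then show ?thesis unfolding wdist_def by (intro exI[of _ xs]) simp
qed

lemma wdist_sym_le: "wdist E w U a b \<le> wdist E w U b a"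
  unfolding wdist_def
proof (rule INF_greatest)
  fix xs assume "xs \<in> {xs. walk_in E U xs \<and> hd xs = b \<and> last xs = a}"
  then have "rev xs \<in> {xs. walk_in E U xs \<and> hd xs = a \<and> last xs = b}"
    by (auto simp: walk_rev hd_rev last_rev)
  then show "(INF xs \<in> {xs. walk_in E U xs \<and> hd xs = a \<and> last xs = b}. enat (walk_weight w xs)) \<le> enat (walk_weight w xs)"
    by (metis (no_types, lifting) INF_lower weight_rev)
qed

lemma wdist_sym: "wdist E w U a b = wdist E w U b a"
  by (simp add: antisym wdist_sym_le)

lemma wdist_tri: "wdist E w U a b \<le> wdist E w U a m + wdist E w U m b"
proof (cases "wdist E w U a m = \<infinity> \<or> wdist E w U m b = \<infinity>")
  case True then show ?thesis by auto
next
  case False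
  then obtain xs ys where xs: "walk_in E U xs" "hd xs = a" "last xs = m" "enat (walk_weight w xs) = wdist E w U a m"
    and ys: "walk_in E U ys" "hd ys = m" "last ys = b" "enat (walk_weight w ys) = wdist E w U m b"
    using wdist_attained by metis
  have ne: "xs \<noteq> []" "ys \<noteq> []" using xs ys by (auto simp: walk_in_def)
  then obtain ys' where ys': "ys = m # ys'" using ys by (cases ys) auto
  have "walk_in E U (xs @ ys')" using walk_append[OF ne(1)] xs ys ys' by simp
  moreover have "walk_weight w (xs @ ys') = walk_weight w xs + walk_weight w ys"
    using weight_append[OF ne(1)] xs ys' by simp
  moreover have "hd (xs @ ys') = a" "last (xs @ ys') = b" using ne xs ys ys' by auto
  ultimately have "wdist E w U a b \<le> enat (walk_weight w xs + walk_weight w ys)"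
    using wdist_le by metis
  then show ?thesis using xs ys by (metis plus_enat_simps(1))
qed

definition isctr where
  "isctr V E w ID r \<delta> z c \<longleftrightarrow> c \<in> V \<and> dvia V E w r \<delta> c z = level V E w r \<delta> z \<and>
      (\<forall>u\<in>V. dvia V E w r \<delta> u z = level V E w r \<delta> z \<longrightarrow> ID c \<le> ID u)"

lemma center_eq:
  assumes "inj_on ID V" "isctr V E w ID r \<delta> z c"
  shows "center V E w ID r \<delta> z = c"
  unfolding center_def
proof (rule the_equality)
  show "c \<in> V \<and> dvia V E w r \<delta> c z = level V E w r \<delta> z \<and>
      (\<forall>u\<in>V. dvia V E w r \<delta> u z = level V E w r \<delta> z \<longrightarrow> ID c \<le> ID u)"
    using assms(2) unfolding isctr_def by blast
next
  fix c' assume "c' \<in> V \<and> dvia V E w r \<delta> c' z = level V E w r \<delta> z \<and>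
      (\<forall>u\<in>V. dvia V E w r \<delta> u z = level V E w r \<delta> z \<longrightarrow> ID c' \<le> ID u)"
  then have "ID c' = ID c" "c' \<in> V" "c \<in> V" using assms(2) unfolding isctr_def
    by (auto intro: antisym)
  then show "c' = c" using assms(1) by (meson inj_onD)
qed

lemma center_isctr:
  assumes "finite V" "z \<in> V" "inj_on ID V"
  shows "isctr V E w ID r \<delta> z (center V E w ID r \<delta> z)"
proof -
  have fin: "finite ((\<lambda>u. dvia V E w r \<delta> u z) ` V)" "(\<lambda>u. dvia V E w r \<delta> u z) ` V \<noteq> {}"
    using assms by auto
  have "level V E w r \<delta> z \<in> (\<lambda>u. dvia V E w r \<delta> u z) ` V"
    unfolding level_def using cInf_eq_Min[OF fin] Min_in[OF fin] by simp
  then have M: "{u \<in> V. dvia V E w r \<delta> u z = level V E w r \<delta> z} \<noteq> {}" by auto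
  define M where "M = {u \<in> V. dvia V E w r \<delta> u z = level V E w r \<delta> z}"
  have "finite (ID ` M)" "ID ` M \<noteq> {}" using M assms(1) unfolding M_def by auto
  then have "Min (ID ` M) \<in> ID ` M" by (rule Min_in)
  then obtain c where c: "c \<in> M" "ID c = Min (ID ` M)" by auto
  have "isctr V E w ID r \<delta> z c"
    unfolding isctr_def using c \<open>finite (ID ` M)\<close> unfolding M_def by auto
  then show ?thesis using center_eq assms by metis
qed

lemma cluster_path:
  assumes G: "wgraph V E w W" and inj: "inj_on ID V" and cV: "c \<in> V"
    and xc: "x \<in> cluster V E w ID r \<delta> c"
  shows "wdist E w (cluster V E w ID r \<delta> c) c x \<le> enat r"
proof -
  let ?d = "wdist E w V"
  let ?D = "\<lambda>u z. dvia V E w r \<delta> u z"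
  let ?L = "\<lambda>z. level V E w r \<delta> z"
  let ?C = "cluster V E w ID r \<delta> c"
  have finV: "finite V" using G by (simp add: wgraph_def)
  have xV: "x \<in> V" and cx: "center V E w ID r \<delta> x = c" using xc by (auto simp: cluster_def)
  have Px: "isctr V E w ID r \<delta> x c" using center_isctr[OF finV xV inj] cx by metis
  have "?L x \<le> ?D x x" unfolding level_def using xV by (rule INF_lower)
  also have "\<dots> \<le> enat (r - \<delta> x)" unfolding dvia_def using wdist_refl[OF xV, of E w] by simp
  finally have Lx: "?L x \<le> enat (r - \<delta> x)" .
  have Dcx: "?D c x = ?L x" using Px by (simp add: isctr_def)
  then have le1: "enat (r - \<delta> c) + ?d c x \<le> enat (r - \<delta> x)" using Lx by (simp add: dvia_def)
  then have dfin: "?d c x \<noteq> \<infinity>" by (cases "?d c x") auto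
  have dcx: "?d c x \<le> enat r"
  proof -
    have "?d c x \<le> enat (r - \<delta> c) + ?d c x" by simp
    also have "\<dots> \<le> enat r" using le1 by (meson diff_le_self enat_ord_simps(1) order_trans)
    finally show ?thesis .
  qed
  obtain xs where xs: "walk_in E V xs" "hd xs = c" "last xs = x" "enat (walk_weight w xs) = ?d c x"
    using wdist_attained[OF dfin] by blast
  have xsne: "xs \<noteq> []" using xs by (simp add: walk_in_def)
  have sub: "set xs \<subseteq> ?C"
  proof
    fix z assume "z \<in> set xs"
    then obtain k where k: "k < length xs" "xs ! k = z" by (auto simp: in_set_conv_nth)
    define pre where "pre = take (Suc k) xs"
    define suf where "suf = drop (Suc k) xs"
    have xs_eq: "xs = pre @ suf" by (simp add: pre_def suf_def)
    have prene: "pre \<noteq> []" by (simp add: pre_def xsne)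
    have lastpre: "last pre = z" using k by (simp add: pre_def take_Suc_conv_app_nth)
    have hdpre: "hd pre = c" using xs xsne by (simp add: pre_def)
    have wpre: "walk_in E V pre" and wsuf: "walk_in E V (z # suf)"
      using walk_append[OF prene, of E V suf] xs(1) xs_eq lastpre by auto
    have weq: "walk_weight w xs = walk_weight w pre + walk_weight w (z # suf)"
      using weight_append[OF prene, of w suf] xs_eq lastpre by simp
    have lastsuf: "last (z # suf) = x" using xs(3) xs_eq lastpre prene by (cases "suf = []") auto
    define s where "s = walk_weight w (z # suf)"
    have zV: "z \<in> V" using wsuf by (rule walk_hd)
    have h1: "?d c z \<le> enat (walk_weight w pre)" using wdist_le[OF wpre hdpre lastpre] .
    have h2: "?d z x \<le> enat s" using wdist_le[OF wsuf _ lastsuf] by (simp add: s_def)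
    have h2': "?D u x \<le> ?D u z + enat s" for u
    proof -
      have "?d u x \<le> ?d u z + enat s" using wdist_tri[of E w V u x z] h2
        by (meson add_left_mono order_trans)
      then show ?thesis unfolding dvia_def by (metis add.assoc add_left_mono)
    qed
    have h3: "?D c z + enat s \<le> ?L x"
    proof -
      have "?D c z + enat s \<le> enat (r - \<delta> c) + enat (walk_weight w pre) + enat s"
        unfolding dvia_def using h1 by (meson add_left_mono add_right_mono)
      also have "\<dots> = enat (r - \<delta> c) + ?d c x" using xs(4) weq s_def
        by (metis add.assoc plus_enat_simps(1))
      also have "\<dots> = ?L x" using Dcx by (simp add: dvia_def)
      finally show ?thesis .
    qed
    have h4: "?D c z \<le> ?D u z" if uV: "u \<in> V" for u
    proof (rule ccontr)
      assume "\<not> ?D c z \<le> ?D u z"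
      then have lt: "?D u z < ?D c z" by simp
      have "?D u z + enat s < ?D c z + enat s" using lt
        by (cases "?D u z"; cases "?D c z") auto
      then have "?D u x < ?L x" using h2' h3 by (meson order_le_less_trans order_less_le_trans)
      moreover have "?L x \<le> ?D u x" unfolding level_def using uV by (rule INF_lower)
      ultimately show False by simp
    qed
    have Lz: "?D c z = ?L z"
    proof (rule antisym)
      show "?D c z \<le> ?L z" unfolding level_def using h4 by (rule INF_greatest)
      show "?L z \<le> ?D c z" unfolding level_def using cV by (rule INF_lower)
    qed
    have "ID c \<le> ID u" if uV: "u \<in> V" and eq: "?D u z = ?L z" for u
    proof -
      have "?D u x \<le> ?L x" using h2'[of u] eq Lz h3 by simp
      moreover have "?L x \<le> ?D u x" unfolding level_def using uV by (rule INF_lower)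
      ultimately have "?D u x = ?L x" by simp
      then show ?thesis using Px uV by (simp add: isctr_def)
    qed
    then have "isctr V E w ID r \<delta> z c" using cV Lz by (simp add: isctr_def)
    then have "center V E w ID r \<delta> z = c" using center_eq[OF inj] by metis
    then show "z \<in> ?C" using zV by (simp add: cluster_def)
  qed
  have "walk_in E ?C xs" using xs(1) sub by (simp add: walk_in_def)
  then have "wdist E w ?C c x \<le> enat (walk_weight w xs)" using wdist_le xs by metis
  then show ?thesis using xs(4) dcx by simp
qed

theorem corollary8:
  fixes V :: "'a set" and E :: "'a set set" and w :: "'a set \<Rightarrow> nat" and W :: nat
    and ID :: "'a \<Rightarrow> nat" and p :: real and r :: nat and \<delta> :: "'a \<Rightarrow> nat"
  assumes "wgraph V E w W"
    and "inj_on ID V"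
    and "0 < p" and "p < 1"
    and "\<forall>v\<in>V. \<delta> v \<le> r"
    and "c \<in> V" and "x \<in> cluster V E w ID r \<delta> c" and "y \<in> cluster V E w ID r \<delta> c"
  shows "wdist E w (cluster V E w ID r \<delta> c) x y \<le> enat (2 * r)"
proof -
  let ?C = "cluster V E w ID r \<delta> c"
  have "wdist E w ?C x y \<le> wdist E w ?C x c + wdist E w ?C c y" by (rule wdist_tri)
  also have "\<dots> = wdist E w ?C c x + wdist E w ?C c y" by (simp add: wdist_sym)
  also have "\<dots> \<le> enat r + enat r"
    using cluster_path[OF assms(1,2,6,7)] cluster_path[OF assms(1,2,6,8)] by (rule add_mono)
  also have "\<dots> = enat (2 * r)" by simp
  finally show ?thesis .
qed

end
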